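(* Let $\phi:\mathrm{dom}(\phi)\to\mathbb{Z}^n$ be a virtual endomorphism of $\mathbb{Z}^n$ and let $A=\phi\otimes\mathbb{R}:\mathbb{R}^n\to\mathbb{R}^n$ be its unique $\mathbb{R}$-linear extension. Suppose the matrix of $A$ has nonnegative entries. Then the contraction coefficient $\rho(\phi)$ equals the Perron–Frobenius leading eigenvalue (spectral radius) $\lambda(A)$ of $A$.
   Context: A virtual endomorphism of a group $G$ is a homomorphism $\phi:\mathrm{dom}(\phi)\to G$ defined on a finite-index subgroup $\mathrm{dom}(\phi)$. For finitely generated $G$ with word length $|\cdot|$ relative to a finite symmetric generating set, the contraction coefficient is $\rho(\phi)=\limsup_{m\to\infty}\big(\limsup_{g\in\mathrm{dom}(\phi^{\circ m}),|g|\to\infty}|\phi^{\circ m}(g)|/|g|\big)^{1/m}$, where $\phi^{\circ m}$ is the $m$-fold composite on its natural domain; it does not depend on the generating set. *)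

theory Defs
  imports "Jordan_Normal_Form.Spectral_Radius" "HOL-Library.Extended_Real"
begin

definition subgroup_Zn :: "nat \<Rightarrow> int vec set \<Rightarrow> bool" where
  "subgroup_Zn n H \<longleftrightarrow> H \<subseteq> carrier_vec n \<and> 0\<^sub>v n \<in> H \<and>
     (\<forall>x\<in>H. \<forall>y\<in>H. x + y \<in> H) \<and> (\<forall>x\<in>H. - x \<in> H)"

definition finite_index_Zn :: "nat \<Rightarrow> int vec set \<Rightarrow> bool" where
  "finite_index_Zn n H \<longleftrightarrow> subgroup_Zn n H \<and>
     finite ((\<lambda>x. (\<lambda>h. x + h) ` H) ` carrier_vec n)"

definition virtual_endo_Zn :: "nat \<Rightarrow> int vec set \<Rightarrow> (int vec \<Rightarrow> int vec) \<Rightarrow> bool" where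
  "virtual_endo_Zn n H phi \<longleftrightarrow> finite_index_Zn n H \<and>
     (\<forall>x\<in>H. phi x \<in> carrier_vec n) \<and> (\<forall>x\<in>H. \<forall>y\<in>H. phi (x + y) = phi x + phi y)"

definition vsum_list :: "nat \<Rightarrow> int vec list \<Rightarrow> int vec" where
  "vsum_list n xs = foldr (+) xs (0\<^sub>v n)"

definition fin_sym_gen_set :: "nat \<Rightarrow> int vec set \<Rightarrow> bool" where
  "fin_sym_gen_set n S \<longleftrightarrow> finite S \<and> S \<subseteq> carrier_vec n \<and> (\<forall>x\<in>S. - x \<in> S) \<and>
     (\<forall>g\<in>carrier_vec n. \<exists>xs. set xs \<subseteq> S \<and> vsum_list n xs = g)"

definition word_len :: "nat \<Rightarrow> int vec set \<Rightarrow> int vec \<Rightarrow> nat" where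
  "word_len n S g = (LEAST k. \<exists>xs. length xs = k \<and> set xs \<subseteq> S \<and> vsum_list n xs = g)"

primrec iter_map :: "(int vec \<Rightarrow> int vec) \<Rightarrow> nat \<Rightarrow> int vec \<Rightarrow> int vec" where
  "iter_map phi 0 = id"
| "iter_map phi (Suc m) = phi \<circ> iter_map phi m"

primrec iter_dom :: "nat \<Rightarrow> int vec set \<Rightarrow> (int vec \<Rightarrow> int vec) \<Rightarrow> nat \<Rightarrow> int vec set" where
  "iter_dom n H phi 0 = carrier_vec n"
| "iter_dom n H phi (Suc m) = {g \<in> iter_dom n H phi m. iter_map phi m g \<in> H}"

text \<open>Inner limsup: over g in dom(phi^m) with word length tending to infinity.\<close>
definition inner_coeff :: "nat \<Rightarrow> int vec set \<Rightarrow> int vec set \<Rightarrow> (int vec \<Rightarrow> int vec) \<Rightarrow> nat \<Rightarrow> ereal" where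
  "inner_coeff n S H phi m =
     Limsup (inf (principal (iter_dom n H phi m)) (filtercomap (\<lambda>g. real (word_len n S g)) at_top))
       (\<lambda>g. ereal (real (word_len n S (iter_map phi m g)) / real (word_len n S g)))"

definition contraction_coeff :: "nat \<Rightarrow> int vec set \<Rightarrow> int vec set \<Rightarrow> (int vec \<Rightarrow> int vec) \<Rightarrow> ereal" where
  "contraction_coeff n S H phi =
     limsup (\<lambda>m. ereal (real_of_ereal (inner_coeff n S H phi m) powr (1 / real m)))"

end

theory Submission
  imports Defs
begin


lemma pow_mat_Suc_left:
  assumes "(A::'a::semiring_1 mat) \<in> carrier_mat n n"
  shows "A ^\<^sub>m (Suc m) = A * A ^\<^sub>m m"
proof (induct m)
  case 0 then show ?case using assms by simp
next
  case (Suc m)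
  have "A ^\<^sub>m Suc (Suc m) = (A * A ^\<^sub>m m) * A" using Suc by simp
  also have "\<dots> = A * (A ^\<^sub>m m * A)" using assms by (simp add: assoc_mult_mat[of _ n n _ n _ n])
  finally show ?case by simp
qed

lemma iter_dom_carrier: "iter_dom n H phi m \<subseteq> carrier_vec n"
  by (induct m) auto

lemma iter_R:
  assumes V: "virtual_endo_Zn n H phi" and A: "A \<in> carrier_mat n n"
    and AH: "\<forall>h\<in>H. A *\<^sub>v map_vec real_of_int h = map_vec real_of_int (phi h)"
  shows "g \<in> iter_dom n H phi m \<Longrightarrow> iter_map phi m g \<in> carrier_vec n \<and>
     map_vec real_of_int (iter_map phi m g) = A ^\<^sub>m m *\<^sub>v map_vec real_of_int g"
proof (induct m)
  case 0
  then show ?case using A by auto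
next
  case (Suc m)
  then have g: "g \<in> iter_dom n H phi m" and h: "iter_map phi m g \<in> H" by auto
  from Suc(1)[OF g] have IH: "map_vec real_of_int (iter_map phi m g) = A ^\<^sub>m m *\<^sub>v map_vec real_of_int g" by auto
  have gc: "g \<in> carrier_vec n" using g iter_dom_carrier by blast
  have "iter_map phi (Suc m) g = phi (iter_map phi m g)" by simp
  moreover have "phi (iter_map phi m g) \<in> carrier_vec n" using V h unfolding virtual_endo_Zn_def by auto
  moreover have "map_vec real_of_int (phi (iter_map phi m g)) = A *\<^sub>v (A ^\<^sub>m m *\<^sub>v map_vec real_of_int g)"
    using AH h IH by metis
  moreover have "A *\<^sub>v (A ^\<^sub>m m *\<^sub>v map_vec real_of_int g) = A ^\<^sub>m (Suc m) *\<^sub>v map_vec real_of_int g"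
    unfolding pow_mat_Suc_left[OF A] using A gc by (intro assoc_mult_mat_vec[symmetric]) auto
  ultimately show ?case by simp
qed

lemma smult_nat_Suc_vec: "(y::int vec) \<in> carrier_vec n \<Longrightarrow> of_nat (Suc k) \<cdot>\<^sub>v y = of_nat k \<cdot>\<^sub>v y + y"
  by (intro eq_vecI) (auto simp: algebra_simps)

lemma smult_zero_vec: "(y::int vec) \<in> carrier_vec n \<Longrightarrow> 0 \<cdot>\<^sub>v y = 0\<^sub>v n"
  by (intro eq_vecI) auto

lemma H_nat_mult:
  assumes G: "subgroup_Zn n H" and y: "y \<in> H"
  shows "of_nat k \<cdot>\<^sub>v y \<in> H"
proof (induct k)
  case 0
  have "y \<in> carrier_vec n" using G y unfolding subgroup_Zn_def by auto
  then show ?case using G smult_zero_vec[of y n] unfolding subgroup_Zn_def by auto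
next
  case (Suc k)
  have "y \<in> carrier_vec n" using G y unfolding subgroup_Zn_def by auto
  then show ?case using G Suc y smult_nat_Suc_vec[of y n k] unfolding subgroup_Zn_def by auto
qed

lemma finite_index_mult:
  assumes F: "finite_index_Zn n H"
  shows "\<exists>N>0. \<forall>y\<in>carrier_vec n. of_nat N \<cdot>\<^sub>v y \<in> H"
proof -
  define C where "C = (\<lambda>x. (\<lambda>h. x + h) ` H) ` carrier_vec n"
  have G: "subgroup_Zn n H" and fC: "finite C" using F unfolding finite_index_Zn_def C_def by auto
  have HC: "H \<subseteq> carrier_vec n" using G unfolding subgroup_Zn_def by auto
  define K where "K = card C"
  have "C \<noteq> {}" unfolding C_def by (auto intro: zero_carrier_vec)
  then have K1: "K \<ge> 1" using fC unfolding K_def by (simp add: Suc_le_eq card_gt_0_iff)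
  have "of_nat (fact K) \<cdot>\<^sub>v y \<in> H" if y: "y \<in> carrier_vec n" for y
  proof -
    define f where "f k = (\<lambda>h. of_nat k \<cdot>\<^sub>v y + h) ` H" for k :: nat
    have sub: "f ` {0..K} \<subseteq> C" unfolding f_def C_def using y by auto
    have "\<not> inj_on f {0..K}"
    proof
      assume "inj_on f {0..K}"
      then have "card (f ` {0..K}) = K + 1" by (simp add: card_image)
      moreover have "card (f ` {0..K}) \<le> K" using card_mono[OF fC sub] K_def by simp
      ultimately show False by simp
    qed
    then obtain i j where ij: "i \<in> {0..K}" "j \<in> {0..K}" "i < j" "f i = f j"
      unfolding inj_on_def by (metis linorder_neqE_nat)
    have "of_nat j \<cdot>\<^sub>v y + 0\<^sub>v n \<in> f j" unfolding f_def using G unfolding subgroup_Zn_def by auto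
    then have "of_nat j \<cdot>\<^sub>v y + 0\<^sub>v n \<in> f i" using ij by simp
    then obtain h where h: "h \<in> H" "of_nat j \<cdot>\<^sub>v y + 0\<^sub>v n = of_nat i \<cdot>\<^sub>v y + h"
      unfolding f_def by auto
    have hc: "h \<in> carrier_vec n" using h HC by auto
    have "of_nat (j - i) \<cdot>\<^sub>v y = h"
    proof (intro eq_vecI)
      fix l assume l: "l < dim_vec h"
      have "(of_nat j \<cdot>\<^sub>v y + 0\<^sub>v n) $ l = (of_nat i \<cdot>\<^sub>v y + h) $ l" using h by simp
      then have "of_nat j * y $ l = of_nat i * y $ l + h $ l" using l hc y by simp
      then show "(of_nat (j - i) \<cdot>\<^sub>v y) $ l = h $ l" using l hc y ij(3)
        by (simp add: of_nat_diff algebra_simps)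
    qed (use hc y in auto)
    then have d: "of_nat (j - i) \<cdot>\<^sub>v y \<in> H" using h by simp
    obtain e where e: "e = j - i" by simp
    have "e dvd fact K" using ij e by (intro dvd_fact) auto
    then obtain q where q: "fact K = e * q" by auto
    have "of_nat q \<cdot>\<^sub>v (of_nat e \<cdot>\<^sub>v y) \<in> H" using H_nat_mult[OF G d] e by simp
    moreover have "of_nat q \<cdot>\<^sub>v (of_nat e \<cdot>\<^sub>v y) = of_nat (fact K) \<cdot>\<^sub>v y"
      unfolding q by (intro eq_vecI) (auto simp: algebra_simps)
    ultimately show ?thesis by simp
  qed
  moreover have "fact K > (0::nat)" by simp
  ultimately show ?thesis by blast
qed

lemma iter_dom_mult:
  assumes V: "virtual_endo_Zn n H phi" and A: "A \<in> carrier_mat n n"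
    and AH: "\<forall>h\<in>H. A *\<^sub>v map_vec real_of_int h = map_vec real_of_int (phi h)"
  shows "\<exists>c>0. \<forall>x\<in>carrier_vec n. of_nat c \<cdot>\<^sub>v x \<in> iter_dom n H phi m"
proof (induct m)
  case 0
  show ?case by (intro exI[of _ 1]) auto
next
  case (Suc m)
  then obtain c where c: "c > 0" "\<forall>x\<in>carrier_vec n. of_nat c \<cdot>\<^sub>v x \<in> iter_dom n H phi m" by auto
  have F: "finite_index_Zn n H" using V unfolding virtual_endo_Zn_def by auto
  obtain N where N: "N > 0" "\<forall>y\<in>carrier_vec n. of_nat N \<cdot>\<^sub>v y \<in> H" using finite_index_mult[OF F] by auto
  have "of_nat (c * N) \<cdot>\<^sub>v x \<in> iter_dom n H phi (Suc m)" if x: "x \<in> carrier_vec n" for x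
  proof -
    have eq: "of_nat (c * N) \<cdot>\<^sub>v x = of_nat c \<cdot>\<^sub>v (of_nat N \<cdot>\<^sub>v x)"
      by (intro eq_vecI) (auto simp: algebra_simps)
    have d1: "of_nat c \<cdot>\<^sub>v (of_nat N \<cdot>\<^sub>v x) \<in> iter_dom n H phi m" using c x by auto
    have d2: "of_nat c \<cdot>\<^sub>v x \<in> iter_dom n H phi m" using c x by auto
    define u where "u = iter_map phi m (of_nat c \<cdot>\<^sub>v x)"
    have u: "u \<in> carrier_vec n" "map_vec real_of_int u = A ^\<^sub>m m *\<^sub>v map_vec real_of_int (of_nat c \<cdot>\<^sub>v x)"
      using iter_R[OF V A AH d2] unfolding u_def by auto
    have Am: "A ^\<^sub>m m \<in> carrier_mat n n" using A by simp
    have "map_vec real_of_int (iter_map phi m (of_nat c \<cdot>\<^sub>v (of_nat N \<cdot>\<^sub>v x)))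
        = A ^\<^sub>m m *\<^sub>v map_vec real_of_int (of_nat c \<cdot>\<^sub>v (of_nat N \<cdot>\<^sub>v x))"
      using iter_R[OF V A AH d1] by auto
    also have "map_vec real_of_int (of_nat c \<cdot>\<^sub>v (of_nat N \<cdot>\<^sub>v x)) = real N \<cdot>\<^sub>v map_vec real_of_int (of_nat c \<cdot>\<^sub>v x)"
      by (intro eq_vecI) (auto simp: algebra_simps)
    also have "A ^\<^sub>m m *\<^sub>v (real N \<cdot>\<^sub>v map_vec real_of_int (of_nat c \<cdot>\<^sub>v x)) = real N \<cdot>\<^sub>v (A ^\<^sub>m m *\<^sub>v map_vec real_of_int (of_nat c \<cdot>\<^sub>v x))"
      by (rule mult_mat_vec[OF Am]) (use x in auto)
    also have "\<dots> = map_vec real_of_int (of_nat N \<cdot>\<^sub>v u)"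
      unfolding u(2)[symmetric] by (intro eq_vecI) auto
    finally have "iter_map phi m (of_nat c \<cdot>\<^sub>v (of_nat N \<cdot>\<^sub>v x)) = of_nat N \<cdot>\<^sub>v u"
      by (rule of_int_hom.vec_hom_inj)
    then have "iter_map phi m (of_nat c \<cdot>\<^sub>v (of_nat N \<cdot>\<^sub>v x)) \<in> H" using N u by auto
    then show ?thesis using d1 eq by simp
  qed
  then show ?case using c N by (intro exI[of _ "c * N"]) auto
qed



definition nZ :: "nat \<Rightarrow> int vec \<Rightarrow> real" where
  "nZ n g = (\<Sum>i<n. \<bar>real_of_int (g $ i)\<bar>)"

lemma vsum_carrier: "set xs \<subseteq> carrier_vec n \<Longrightarrow> vsum_list n xs \<in> carrier_vec n"
  by (induct xs) (auto simp: vsum_list_def)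

lemma vsum_append: "set xs \<subseteq> carrier_vec n \<Longrightarrow> set ys \<subseteq> carrier_vec n \<Longrightarrow>
   vsum_list n (xs @ ys) = vsum_list n xs + vsum_list n ys"
proof (induct xs)
  case Nil then show ?case using vsum_carrier[of ys n] by (simp add: vsum_list_def)
next
  case (Cons x xs)
  then have "vsum_list n (xs @ ys) = vsum_list n xs + vsum_list n ys" by auto
  moreover have "x + (vsum_list n xs + vsum_list n ys) = (x + vsum_list n xs) + vsum_list n ys"
    using Cons(2,3) vsum_carrier[of xs n] vsum_carrier[of ys n] by (intro assoc_add_vec[symmetric]) auto
  ultimately show ?case by (simp add: vsum_list_def)
qed

lemma vsum_uminus: "set xs \<subseteq> carrier_vec n \<Longrightarrow> vsum_list n (map uminus xs) = - vsum_list n xs"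
proof (induct xs)
  case Nil then show ?case by (auto simp: vsum_list_def intro!: eq_vecI)
next
  case (Cons x xs)
  then have "vsum_list n (map uminus xs) = - vsum_list n xs" by auto
  then show ?case using Cons(2) vsum_carrier[of xs n]
    by (auto simp: vsum_list_def intro!: eq_vecI)
qed

context
  fixes n S assumes SG: "fin_sym_gen_set n S"
begin

lemma SC: "S \<subseteq> carrier_vec n" using SG unfolding fin_sym_gen_set_def by auto

lemma wl_ex: assumes "g \<in> carrier_vec n"
  shows "\<exists>xs. length xs = word_len n S g \<and> set xs \<subseteq> S \<and> vsum_list n xs = g"
proof -
  obtain xs where "set xs \<subseteq> S \<and> vsum_list n xs = g" using SG assms unfolding fin_sym_gen_set_def by blast
  then have "\<exists>k xs. length xs = k \<and> set xs \<subseteq> S \<and> vsum_list n xs = g" by blast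
  then show ?thesis unfolding word_len_def by (rule LeastI_ex)
qed

lemma wl_le: "set xs \<subseteq> S \<Longrightarrow> vsum_list n xs = g \<Longrightarrow> word_len n S g \<le> length xs"
  unfolding word_len_def by (rule Least_le) blast

lemma wl_zero: "word_len n S (0\<^sub>v n) = 0"
  using wl_le[of "[]" "0\<^sub>v n"] by (simp add: vsum_list_def)

lemma wl_add: assumes x: "x \<in> carrier_vec n" and y: "y \<in> carrier_vec n"
  shows "word_len n S (x + y) \<le> word_len n S x + word_len n S y"
proof -
  obtain xs where xs: "length xs = word_len n S x" "set xs \<subseteq> S" "vsum_list n xs = x" using wl_ex[OF x] by blast
  obtain ys where ys: "length ys = word_len n S y" "set ys \<subseteq> S" "vsum_list n ys = y" using wl_ex[OF y] by blast
  have "vsum_list n (xs @ ys) = x + y" using vsum_append[of xs n ys] xs ys SC by auto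
  then have "word_len n S (x + y) \<le> length (xs @ ys)" using xs ys by (intro wl_le) auto
  then show ?thesis using xs ys by simp
qed

lemma wl_neg: assumes x: "x \<in> carrier_vec n"
  shows "word_len n S (- x) \<le> word_len n S x"
proof -
  obtain xs where xs: "length xs = word_len n S x" "set xs \<subseteq> S" "vsum_list n xs = x" using wl_ex[OF x] by blast
  have "vsum_list n (map uminus xs) = - x" using vsum_uminus[of xs n] xs SC by auto
  moreover have "set (map uminus xs) \<subseteq> S" using xs SG unfolding fin_sym_gen_set_def by auto
  ultimately have "word_len n S (- x) \<le> length (map uminus xs)" by (intro wl_le) auto
  then show ?thesis using xs by simp
qed

lemma wl_nat_mult: assumes x: "x \<in> carrier_vec n"
  shows "word_len n S (of_nat k \<cdot>\<^sub>v x) \<le> k * word_len n S x"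
proof (induct k)
  case 0
  have "(0::int) \<cdot>\<^sub>v x = 0\<^sub>v n" using x by (intro eq_vecI) auto
  then show ?case using wl_zero by simp
next
  case (Suc k)
  have "of_nat (Suc k) \<cdot>\<^sub>v x = of_nat k \<cdot>\<^sub>v x + x" using x by (intro eq_vecI) (auto simp: algebra_simps)
  then have "word_len n S (of_nat (Suc k) \<cdot>\<^sub>v x) \<le> word_len n S (of_nat k \<cdot>\<^sub>v x) + word_len n S x"
    using wl_add[of "of_nat k \<cdot>\<^sub>v x" x] x by simp
  then show ?case using Suc by simp
qed

lemma wl_int_mult: assumes x: "x \<in> carrier_vec n"
  shows "real (word_len n S (k \<cdot>\<^sub>v x)) \<le> \<bar>real_of_int k\<bar> * real (word_len n S x)"
proof (cases "k \<ge> 0")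
  case True
  then have "k \<cdot>\<^sub>v x = of_nat (nat k) \<cdot>\<^sub>v x" by simp
  then have "word_len n S (k \<cdot>\<^sub>v x) \<le> nat k * word_len n S x" using wl_nat_mult[OF x, of "nat k"] by simp
  then have "real (word_len n S (k \<cdot>\<^sub>v x)) \<le> real (nat k * word_len n S x)" by linarith
  then show ?thesis using True by simp
next
  case False
  then have "k \<cdot>\<^sub>v x = - (of_nat (nat (- k)) \<cdot>\<^sub>v x)" using x by (intro eq_vecI) auto
  then have "word_len n S (k \<cdot>\<^sub>v x) \<le> word_len n S (of_nat (nat (- k)) \<cdot>\<^sub>v x)"
    using wl_neg[of "of_nat (nat (- k)) \<cdot>\<^sub>v x"] x by simp
  also have "\<dots> \<le> nat (- k) * word_len n S x" by (rule wl_nat_mult[OF x])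
  finally have "real (word_len n S (k \<cdot>\<^sub>v x)) \<le> real (nat (- k) * word_len n S x)" by linarith
  then show ?thesis using False by simp
qed

definition M1 :: real where "M1 = 1 + (\<Sum>s\<in>S. nZ n s)"

lemma nZ_nonneg: "nZ n g \<ge> 0" unfolding nZ_def by (auto intro: sum_nonneg)

lemma M1_pos: "M1 > 0" and M1_ge: "s \<in> S \<Longrightarrow> nZ n s \<le> M1"
proof -
  have fS: "finite S" using SG unfolding fin_sym_gen_set_def by auto
  have "(\<Sum>s\<in>S. nZ n s) \<ge> 0" by (intro sum_nonneg nZ_nonneg)
  then show "M1 > 0" unfolding M1_def by simp
  assume "s \<in> S"
  then have "nZ n s \<le> (\<Sum>s\<in>S. nZ n s)" using fS by (intro member_le_sum nZ_nonneg)
  then show "nZ n s \<le> M1" unfolding M1_def by simp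
qed

lemma nZ_add: "x \<in> carrier_vec n \<Longrightarrow> y \<in> carrier_vec n \<Longrightarrow> nZ n (x + y) \<le> nZ n x + nZ n y"
  unfolding nZ_def sum.distrib[symmetric] by (intro sum_mono) auto

lemma nZ_vsum: "set xs \<subseteq> S \<Longrightarrow> nZ n (vsum_list n xs) \<le> real (length xs) * M1"
proof (induct xs)
  case Nil then show ?case by (simp add: vsum_list_def nZ_def)
next
  case (Cons x xs)
  have "nZ n (vsum_list n (x # xs)) = nZ n (x + vsum_list n xs)" by (simp add: vsum_list_def)
  also have "\<dots> \<le> nZ n x + nZ n (vsum_list n xs)"
    using Cons(2) SC vsum_carrier[of xs n] by (intro nZ_add) auto
  also have "\<dots> \<le> M1 + real (length xs) * M1" using Cons M1_ge by (intro add_mono) auto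
  finally show ?case by (simp add: algebra_simps)
qed

lemma nZ_le_wl: "g \<in> carrier_vec n \<Longrightarrow> nZ n g \<le> M1 * real (word_len n S g)"
  using wl_ex[of g] nZ_vsum by (metis mult.commute)

definition C1 :: real where "C1 = 1 + (\<Sum>i<n. real (word_len n S (unit_vec n i)))"

lemma C1_pos: "C1 > 0" unfolding C1_def by (simp add: add_pos_nonneg sum_nonneg)

lemma C1_ge: "i < n \<Longrightarrow> real (word_len n S (unit_vec n i)) \<le> C1"
proof -
  assume "i < n"
  then have "real (word_len n S (unit_vec n i)) \<le> (\<Sum>i<n. real (word_len n S (unit_vec n i)))"
    by (intro member_le_sum) auto
  then show ?thesis unfolding C1_def by simp
qed

lemma wl_le_nZ: assumes g: "g \<in> carrier_vec n"
  shows "real (word_len n S g) \<le> C1 * nZ n g"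
proof -
  define tr where "tr j = vec n (\<lambda>i. if i < j then g $ i else 0)" for j
  have trc: "tr j \<in> carrier_vec n" for j unfolding tr_def by simp
  have "j \<le> n \<Longrightarrow> real (word_len n S (tr j)) \<le> C1 * (\<Sum>i<j. \<bar>real_of_int (g $ i)\<bar>)" for j
  proof (induct j)
    case 0
    have "tr 0 = 0\<^sub>v n" unfolding tr_def by (intro eq_vecI) auto
    then show ?case using wl_zero by simp
  next
    case (Suc j)
    then have j: "j < n" by simp
    have eq: "tr (Suc j) = tr j + (g $ j) \<cdot>\<^sub>v unit_vec n j"
      unfolding tr_def using j by (intro eq_vecI) (auto simp: less_Suc_eq)
    have "real (word_len n S (tr (Suc j))) \<le> real (word_len n S (tr j)) + real (word_len n S ((g $ j) \<cdot>\<^sub>v unit_vec n j))"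
      unfolding eq using wl_add[OF trc, of "(g $ j) \<cdot>\<^sub>v unit_vec n j" j] by simp
    also have "\<dots> \<le> C1 * (\<Sum>i<j. \<bar>real_of_int (g $ i)\<bar>) + \<bar>real_of_int (g $ j)\<bar> * C1"
    proof (intro add_mono)
      show "real (word_len n S (tr j)) \<le> C1 * (\<Sum>i<j. \<bar>real_of_int (g $ i)\<bar>)" using Suc j by simp
      have "real (word_len n S ((g $ j) \<cdot>\<^sub>v unit_vec n j)) \<le> \<bar>real_of_int (g $ j)\<bar> * real (word_len n S (unit_vec n j))"
        by (rule wl_int_mult) simp
      also have "\<dots> \<le> \<bar>real_of_int (g $ j)\<bar> * C1" using C1_ge[OF j] by (intro mult_left_mono) auto
      finally show "real (word_len n S ((g $ j) \<cdot>\<^sub>v unit_vec n j)) \<le> \<bar>real_of_int (g $ j)\<bar> * C1" .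
    qed
    also have "\<dots> = C1 * (\<Sum>i<Suc j. \<bar>real_of_int (g $ i)\<bar>)" by (simp add: algebra_simps)
    finally show ?case .
  qed
  moreover have "tr n = g" unfolding tr_def using g by (intro eq_vecI) auto
  ultimately show ?thesis unfolding nZ_def by fastforce
qed

lemma wl_pos: assumes g: "g \<in> carrier_vec n" and "g \<noteq> 0\<^sub>v n"
  shows "word_len n S g \<ge> 1"
proof (rule ccontr)
  assume "\<not> ?thesis"
  then have "word_len n S g = 0" by simp
  then obtain xs where "length xs = 0" "vsum_list n xs = g" using wl_ex[OF g] by auto
  then show False using assms by (simp add: vsum_list_def)
qed

end



lemma scalar_prod_sum: "v \<in> carrier_vec n \<Longrightarrow> w \<in> carrier_vec n \<Longrightarrow> v \<bullet> w = (\<Sum>j<n. v $ j * w $ j)"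
  unfolding scalar_prod_def by (simp add: lessThan_atLeast0)

lemma mat_vec_entry: "B \<in> carrier_mat n n \<Longrightarrow> v \<in> carrier_vec n \<Longrightarrow> i < n \<Longrightarrow>
   (B *\<^sub>v v) $ i = (\<Sum>j<n. B $$ (i, j) * v $ j)"
  by (simp add: scalar_prod_sum[of _ n])

lemma mat_vec_norm_bound:
  fixes B :: "'a::real_normed_field mat"
  assumes B: "B \<in> carrier_mat n n" and v: "v \<in> carrier_vec n"
  shows "(\<Sum>i<n. norm ((B *\<^sub>v v) $ i)) \<le> (\<Sum>i<n. \<Sum>j<n. norm (B $$ (i, j))) * (\<Sum>j<n. norm (v $ j))"
proof -
  define V where "V = (\<Sum>j<n. norm (v $ j))"
  have vj: "norm (v $ j) \<le> V" if "j < n" for j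
    unfolding V_def using that by (intro member_le_sum) auto
  have "norm ((B *\<^sub>v v) $ i) \<le> (\<Sum>j<n. norm (B $$ (i, j))) * V" if i: "i < n" for i
  proof -
    have "norm ((B *\<^sub>v v) $ i) = norm (\<Sum>j<n. B $$ (i, j) * v $ j)" using mat_vec_entry[OF B v i] by simp
    also have "\<dots> \<le> (\<Sum>j<n. norm (B $$ (i, j) * v $ j))" by (rule norm_sum)
    also have "\<dots> \<le> (\<Sum>j<n. norm (B $$ (i, j)) * V)"
      by (intro sum_mono) (auto simp: norm_mult intro: mult_left_mono vj)
    finally show ?thesis by (simp add: sum_distrib_right)
  qed
  then have "(\<Sum>i<n. norm ((B *\<^sub>v v) $ i)) \<le> (\<Sum>i<n. (\<Sum>j<n. norm (B $$ (i, j))) * V)"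
    by (intro sum_mono) auto
  then show ?thesis unfolding V_def by (simp add: sum_distrib_right)
qed

lemma pow_nonneg:
  assumes A: "(A :: real mat) \<in> carrier_mat n n" and nn: "\<forall>i<n. \<forall>j<n. A $$ (i, j) \<ge> 0"
  shows "\<forall>i<n. \<forall>j<n. (A ^\<^sub>m m) $$ (i, j) \<ge> 0"
proof (induct m)
  case 0 then show ?case using A by auto
next
  case (Suc m)
  show ?case
  proof (intro allI impI)
    fix i j assume ij: "i < n" "j < n"
    have "(A ^\<^sub>m Suc m) $$ (i, j) = row (A ^\<^sub>m m) i \<bullet> col A j" using A ij by simp
    also have "\<dots> = (\<Sum>k<n. (A ^\<^sub>m m) $$ (i, k) * A $$ (k, j))" using A ij by (simp add: scalar_prod_sum[of _ n])
    also have "\<dots> \<ge> 0" using Suc nn ij by (intro sum_nonneg) auto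
    finally show "(A ^\<^sub>m Suc m) $$ (i, j) \<ge> 0" .
  qed
qed

lemma nonneg_ones:
  assumes B: "(B :: real mat) \<in> carrier_mat n n" and nn: "\<forall>i<n. \<forall>j<n. B $$ (i, j) \<ge> 0" and c: "c \<ge> 0"
  shows "(\<Sum>i<n. \<bar>(B *\<^sub>v vec n (\<lambda>_. c)) $ i\<bar>) = c * (\<Sum>i<n. \<Sum>j<n. \<bar>B $$ (i, j)\<bar>)"
proof -
  have "\<bar>(B *\<^sub>v vec n (\<lambda>_. c)) $ i\<bar> = c * (\<Sum>j<n. \<bar>B $$ (i, j)\<bar>)" if i: "i < n" for i
  proof -
    have "(B *\<^sub>v vec n (\<lambda>_. c)) $ i = (\<Sum>j<n. B $$ (i, j) * c)" using mat_vec_entry[OF B _ i] by simp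
    also have "\<dots> = c * (\<Sum>j<n. \<bar>B $$ (i, j)\<bar>)" using nn i by (simp add: sum_distrib_left algebra_simps)
    finally show ?thesis using c by (simp add: sum_nonneg)
  qed
  then show ?thesis by (simp add: sum_distrib_left)
qed

lemma pow_smult_mat:
  assumes A: "(A :: 'a::comm_ring_1 mat) \<in> carrier_mat n n"
  shows "(k \<cdot>\<^sub>m A) ^\<^sub>m m = k ^ m \<cdot>\<^sub>m (A ^\<^sub>m m)"
proof (induct m)
  case 0 then show ?case using A by (auto intro!: eq_matI)
next
  case (Suc m)
  have "(k \<cdot>\<^sub>m A) ^\<^sub>m Suc m = (k ^ m \<cdot>\<^sub>m (A ^\<^sub>m m)) * (k \<cdot>\<^sub>m A)" using Suc by simp
  also have "\<dots> = k ^ Suc m \<cdot>\<^sub>m (A ^\<^sub>m Suc m)"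
    using A apply (simp add: mult_smult_distrib[of _ n n _ n] mult_smult_assoc_mat[of _ n n _ n])
    by (intro eq_matI) auto
  finally show ?case .
qed

definition tm :: "nat \<Rightarrow> real mat \<Rightarrow> nat \<Rightarrow> real" where
  "tm n A m = (\<Sum>i<n. \<Sum>j<n. \<bar>(A ^\<^sub>m m) $$ (i, j)\<bar>)"

lemma tm_nonneg: "tm n A m \<ge> 0" unfolding tm_def by (intro sum_nonneg) auto

lemma tm_lower:
  assumes A: "A \<in> carrier_mat n n" and n: "n > 0"
  shows "spectral_radius (map_mat complex_of_real A) ^ m \<le> tm n A m"
proof -
  define Ac where "Ac = map_mat complex_of_real A"
  have Ac: "Ac \<in> carrier_mat n n" using A unfolding Ac_def by simp
  obtain lam where lam: "lam \<in> spectrum Ac" "norm lam = spectral_radius Ac"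
    using spectral_radius_mem_max(1)[OF Ac n] by auto
  then obtain w where w: "eigenvector Ac w lam" unfolding spectrum_def eigenvalue_def by auto
  have wc: "w \<in> carrier_vec n" and w0: "w \<noteq> 0\<^sub>v n" using w Ac unfolding eigenvector_def by auto
  have pw: "Ac ^\<^sub>m m *\<^sub>v w = lam ^ m \<cdot>\<^sub>v w" by (rule eigenvector_pow[OF Ac w])
  have pm: "Ac ^\<^sub>m m = map_mat complex_of_real (A ^\<^sub>m m)"
    unfolding Ac_def by (rule of_real_hom.mat_hom_pow[OF A, symmetric])
  define W where "W = (\<Sum>j<n. norm (w $ j))"
  obtain j where j: "j < n" "w $ j \<noteq> 0" using w0 wc by (metis eq_vecI index_zero_vec(1,2) carrier_vecD)
  have "norm (w $ j) \<le> W" unfolding W_def using j by (intro member_le_sum) auto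
  moreover have "norm (w $ j) > 0" using j by simp
  ultimately have Wp: "W > 0" by linarith
  have "(\<Sum>i<n. norm ((Ac ^\<^sub>m m *\<^sub>v w) $ i)) \<le> (\<Sum>i<n. \<Sum>j<n. norm ((Ac ^\<^sub>m m) $$ (i, j))) * W"
    unfolding W_def by (rule mat_vec_norm_bound[OF _ wc]) (use Ac in simp)
  also have "(\<Sum>i<n. \<Sum>j<n. norm ((Ac ^\<^sub>m m) $$ (i, j))) = tm n A m"
    unfolding tm_def pm using A by simp
  also have "(\<Sum>i<n. norm ((Ac ^\<^sub>m m *\<^sub>v w) $ i)) = norm lam ^ m * W"
    unfolding pw W_def using wc by (simp add: norm_mult norm_power sum_distrib_left)
  finally have "norm lam ^ m * W \<le> tm n A m * W" .
  then show ?thesis using Wp lam(2) unfolding Ac_def by simp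
qed

lemma tm_upper:
  assumes A: "A \<in> carrier_mat n n" and n: "n > 0" and r: "r > spectral_radius (map_mat complex_of_real A)"
  shows "\<exists>K. \<forall>m. tm n A m \<le> K * r ^ m"
proof -
  define Ac where "Ac = map_mat complex_of_real A"
  have Ac: "Ac \<in> carrier_mat n n" using A unfolding Ac_def by simp
  obtain x :: complex where "spectral_radius Ac = norm x" using spectral_radius_mem_max(1)[OF Ac n] by auto
  then have "spectral_radius Ac \<ge> 0" by simp
  then have r0: "r > 0" using r unfolding Ac_def by simp
  define B where "B = complex_of_real (1 / r) \<cdot>\<^sub>m Ac"
  have B: "B \<in> carrier_mat n n" using Ac unfolding B_def by simp
  have "spectral_radius B < 1"
  proof -
    obtain mu where mu: "mu \<in> spectrum B" "norm mu = spectral_radius B"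
      using spectral_radius_mem_max(1)[OF B n] by auto
    then obtain v where v: "eigenvector B v mu" unfolding spectrum_def eigenvalue_def by auto
    have vc: "v \<in> carrier_vec n" and v0: "v \<noteq> 0\<^sub>v n" and Bv: "B *\<^sub>v v = mu \<cdot>\<^sub>v v"
      using v B unfolding eigenvector_def by auto
    have "Ac *\<^sub>v v = (complex_of_real r * mu) \<cdot>\<^sub>v v"
    proof (intro eq_vecI)
      fix i assume "i < dim_vec ((complex_of_real r * mu) \<cdot>\<^sub>v v)"
      then have i: "i < n" using vc by simp
      have "(B *\<^sub>v v) $ i = mu * v $ i" using Bv i vc by simp
      then have "(\<Sum>j<n. B $$ (i, j) * v $ j) = mu * v $ i" using mat_vec_entry[OF B vc i] by simp
      moreover have "(\<Sum>j<n. B $$ (i, j) * v $ j) = complex_of_real (1 / r) * (\<Sum>j<n. Ac $$ (i, j) * v $ j)"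
        unfolding B_def using Ac i by (simp add: sum_distrib_left algebra_simps)
      ultimately have "(\<Sum>j<n. Ac $$ (i, j) * v $ j) = complex_of_real r * mu * v $ i"
        using r0 by (auto simp: field_simps of_real_def)
      then show "(Ac *\<^sub>v v) $ i = ((complex_of_real r * mu) \<cdot>\<^sub>v v) $ i"
        using mat_vec_entry[OF Ac vc i] i vc by simp
    qed (use Ac vc in simp)
    then have "eigenvector Ac v (complex_of_real r * mu)" using vc v0 Ac unfolding eigenvector_def by simp
    then have "complex_of_real r * mu \<in> spectrum Ac" unfolding spectrum_def eigenvalue_def by auto
    then have "norm (complex_of_real r * mu) \<le> spectral_radius Ac"
      using spectral_radius_mem_max(2)[OF Ac n] by auto
    then have "r * norm mu \<le> spectral_radius Ac" using r0 by (simp add: norm_mult)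
    then have "r * norm mu < r * 1" using r unfolding Ac_def by linarith
    then have "norm mu < 1" using r0 mult_less_cancel_left_pos by blast
    then show ?thesis using mu by simp
  qed
  from spectral_radius_jnf_norm_bound_less_1_upper_triangular[OF B this]
  obtain c where c: "\<forall>k. norm_bound (B ^\<^sub>m k) c" by auto
  have "tm n A m \<le> (real n * real n * c) * r ^ m" for m
  proof -
    have e: "\<bar>(A ^\<^sub>m m) $$ (i, j)\<bar> \<le> c * r ^ m" if ij: "i < n" "j < n" for i j
    proof -
      have "B ^\<^sub>m m = complex_of_real (1 / r) ^ m \<cdot>\<^sub>m Ac ^\<^sub>m m" unfolding B_def by (rule pow_smult_mat[OF Ac])
      also have "Ac ^\<^sub>m m = map_mat complex_of_real (A ^\<^sub>m m)"
        unfolding Ac_def by (rule of_real_hom.mat_hom_pow[OF A, symmetric])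
      finally have "(B ^\<^sub>m m) $$ (i, j) = complex_of_real ((1 / r) ^ m * (A ^\<^sub>m m) $$ (i, j))"
        using ij A by simp
      moreover have "norm ((B ^\<^sub>m m) $$ (i, j)) \<le> c" using c ij B unfolding norm_bound_def by simp
      ultimately have "(1 / r) ^ m * \<bar>(A ^\<^sub>m m) $$ (i, j)\<bar> \<le> c" using r0 by (simp add: norm_mult norm_power norm_divide)
      then show ?thesis using r0 by (simp add: field_simps)
    qed
    have "tm n A m \<le> (\<Sum>i<n. \<Sum>j<n. c * r ^ m)" unfolding tm_def using e by (intro sum_mono) auto
    then show ?thesis by (simp add: algebra_simps)
  qed
  then show ?thesis by blast
qed



lemma Limsup_filter_mono: "G \<le> F \<Longrightarrow> Limsup G f \<le> Limsup F f"
  unfolding Limsup_def by (rule INF_superset_mono) (auto simp: le_filter_def)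

lemma Limsup_seq_lower:
  assumes lim: "filterlim s F sequentially" and b: "\<And>k. y \<le> f (s k)"
  shows "y \<le> Limsup F (f :: _ \<Rightarrow> ereal)"
proof -
  have "y \<le> Limsup sequentially (\<lambda>k. f (s k))"
    using b by (intro le_Limsup) auto
  also have "\<dots> \<le> Limsup (filtermap s sequentially) f" by (rule Limsup_filtermap_ge)
  also have "\<dots> \<le> Limsup F f" using lim unfolding filterlim_def by (rule Limsup_filter_mono)
  finally show ?thesis .
qed

lemma nZ_map: "g \<in> carrier_vec n \<Longrightarrow> nZ n g = (\<Sum>i<n. \<bar>(map_vec real_of_int g) $ i\<bar>)"
  unfolding nZ_def by (intro sum.cong) auto

lemma root_pow: assumes "(r::real) \<ge> 0" "m \<ge> 1" shows "(r ^ m) powr (1 / real m) = r"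
proof (cases "r = 0")
  case True then show ?thesis using assms by simp
next
  case False
  then have "r > 0" using assms by simp
  then have "(r ^ m) powr (1 / real m) = (r powr real m) powr (1 / real m)" by (simp add: powr_realpow)
  also have "\<dots> = r" using assms by (simp add: powr_powr)
  finally show ?thesis .
qed

context
  fixes n H phi A S
  assumes n1: "n \<ge> 1"
    and V: "virtual_endo_Zn n H phi"
    and A: "A \<in> carrier_mat n n"
    and AH: "\<forall>h\<in>H. A *\<^sub>v map_vec real_of_int h = map_vec real_of_int (phi h)"
    and nn: "\<forall>i<n. \<forall>j<n. A $$ (i, j) \<ge> 0"
    and SG: "fin_sym_gen_set n S"
begin

lemma inner_upper: "inner_coeff n S H phi m \<le> ereal (C1 n S * M1 n S * tm n A m)"
  unfolding inner_coeff_def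
proof (rule Limsup_bounded)
  let ?wl = "word_len n S"
  have "?wl (iter_map phi m g) / ?wl g \<le> C1 n S * M1 n S * tm n A m"
    if g: "g \<in> iter_dom n H phi m" and g1: "real (?wl g) \<ge> 1" for g
  proof -
    have gc: "g \<in> carrier_vec n" using g iter_dom_carrier by blast
    define h where "h = iter_map phi m g"
    have h: "h \<in> carrier_vec n" "map_vec real_of_int h = A ^\<^sub>m m *\<^sub>v map_vec real_of_int g"
      using iter_R[OF V A AH g] unfolding h_def by auto
    have "nZ n h = (\<Sum>i<n. \<bar>(A ^\<^sub>m m *\<^sub>v map_vec real_of_int g) $ i\<bar>)" using nZ_map[OF h(1)] h(2) by simp
    also have "\<dots> \<le> tm n A m * nZ n g"
      using mat_vec_norm_bound[of "A ^\<^sub>m m" n "map_vec real_of_int g"] A gc nZ_map[OF gc]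
      unfolding tm_def by simp
    finally have hb: "nZ n h \<le> tm n A m * nZ n g" .
    have "real (?wl h) \<le> C1 n S * nZ n h" by (rule wl_le_nZ[OF SG h(1)])
    also have "\<dots> \<le> C1 n S * (tm n A m * nZ n g)" using hb C1_pos[OF SG] by (intro mult_left_mono) auto
    also have "\<dots> \<le> C1 n S * (tm n A m * (M1 n S * real (?wl g)))"
      using nZ_le_wl[OF SG gc] C1_pos[OF SG] tm_nonneg[of n A m]
      by (intro mult_left_mono) auto
    finally have "real (?wl h) \<le> (C1 n S * M1 n S * tm n A m) * real (?wl g)" by (simp add: algebra_simps)
    then show ?thesis unfolding h_def[symmetric] using g1 by (simp add: divide_le_eq)
  qed
  then show "\<forall>\<^sub>F g in inf (principal (iter_dom n H phi m)) (filtercomap (\<lambda>g. real (word_len n S g)) at_top).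
      ereal (real (word_len n S (iter_map phi m g)) / real (word_len n S g)) \<le> ereal (C1 n S * M1 n S * tm n A m)"
    by (subst inf_commute, subst eventually_inf_principal)
       (auto simp: eventually_filtercomap_at_top_linorder intro!: exI[of _ 1])
qed

lemma inner_lower: "ereal (tm n A m / (M1 n S * C1 n S * real n)) \<le> inner_coeff n S H phi m"
  unfolding inner_coeff_def
proof -
  let ?wl = "word_len n S"
  obtain c where c: "c > 0" "\<forall>x\<in>carrier_vec n. of_nat c \<cdot>\<^sub>v x \<in> iter_dom n H phi m"
    using iter_dom_mult[OF V A AH] by blast
  define s where "s k = vec n (\<lambda>_. int (c * Suc k))" for k
  have sc: "s k \<in> carrier_vec n" for k unfolding s_def by simp
  have sd: "s k \<in> iter_dom n H phi m" for k
  proof -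
    have "s k = of_nat c \<cdot>\<^sub>v vec n (\<lambda>_. int (Suc k))" unfolding s_def by (intro eq_vecI) (auto simp: algebra_simps)
    then show ?thesis using c by simp
  qed
  have nZs: "nZ n (s k) = real n * real (c * Suc k)" for k unfolding s_def nZ_def by simp
  have M1p: "M1 n S > 0" using M1_pos[OF SG] .
  have C1p: "C1 n S > 0" using C1_pos[OF SG] .
  have wls: "real (?wl (s k)) \<ge> real n * real (c * Suc k) / M1 n S" for k
    using nZ_le_wl[OF SG sc[of k]] nZs[of k] M1p by (simp add: divide_le_eq mult.commute)
  have lim: "filterlim s (inf (principal (iter_dom n H phi m)) (filtercomap (\<lambda>g. real (?wl g)) at_top)) sequentially"
  proof -
    have L: "filterlim (\<lambda>k. (real n * real c / M1 n S) * real k) at_top sequentially"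
      by (rule filterlim_tendsto_pos_mult_at_top[OF tendsto_const _ filterlim_real_sequentially]) (use n1 c M1p in simp)
    have B: "(real n * real c / M1 n S) * real k \<le> real (?wl (s k))" for k
    proof -
      have "(real n * real c / M1 n S) * real k \<le> real n * real (c * Suc k) / M1 n S"
        using M1p by (simp add: field_simps)
      then show ?thesis using wls[of k] by linarith
    qed
    have "filterlim (\<lambda>k. real (?wl (s k))) at_top sequentially"
      by (intro filterlim_at_top_mono[OF L] always_eventually allI B)
    then show ?thesis
      by (auto simp: filterlim_inf filterlim_principal filterlim_filtercomap_iff o_def sd)
  qed
  have An: "\<forall>i<n. \<forall>j<n. (A ^\<^sub>m m) $$ (i, j) \<ge> 0" by (rule pow_nonneg[OF A nn])
  have "ereal (tm n A m / (M1 n S * C1 n S * real n)) \<le>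
        ereal (real (?wl (iter_map phi m (s k))) / real (?wl (s k)))" for k
  proof -
    define h where "h = iter_map phi m (s k)"
    define C where "C = real (c * Suc k)"
    have Cp: "C > 0" unfolding C_def using c by (simp del: of_nat_mult add: of_nat_mult[symmetric])
    have h: "h \<in> carrier_vec n" "map_vec real_of_int h = A ^\<^sub>m m *\<^sub>v map_vec real_of_int (s k)"
      using iter_R[OF V A AH sd[of k]] unfolding h_def by auto
    have rs: "map_vec real_of_int (s k) = vec n (\<lambda>_. C)" unfolding s_def C_def by (intro eq_vecI) auto
    have "nZ n h = C * tm n A m"
      using nZ_map[OF h(1)] h(2) rs nonneg_ones[of "A ^\<^sub>m m" n C] A An Cp unfolding tm_def by simp
    then have wh: "C * tm n A m \<le> M1 n S * real (?wl h)" using nZ_le_wl[OF SG h(1)] by simp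
    have ws: "real (?wl (s k)) \<le> C1 n S * (real n * C)" using wl_le_nZ[OF SG sc[of k]] nZs[of k] unfolding C_def by simp
    have wsp: "real (?wl (s k)) > 0"
    proof -
      have "real n * real (c * Suc k) / M1 n S > 0" using n1 c M1p by (intro divide_pos_pos mult_pos_pos) (simp_all del: of_nat_mult)
      then show ?thesis using wls[of k] by linarith
    qed
    have "tm n A m / (M1 n S * C1 n S * real n) = (C * tm n A m) / (M1 n S * (C1 n S * (real n * C)))"
      using Cp by (simp add: field_simps)
    also have "\<dots> \<le> (M1 n S * real (?wl h)) / (M1 n S * real (?wl (s k)))"
    proof (rule frac_le)
      show "0 \<le> M1 n S * real (?wl h)" using M1p by simp
      show "C * tm n A m \<le> M1 n S * real (?wl h)" by (rule wh)
      show "0 < M1 n S * real (?wl (s k))" using M1p wsp by simp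
      show "M1 n S * real (?wl (s k)) \<le> M1 n S * (C1 n S * (real n * C))" using ws M1p by simp
    qed
    also have "\<dots> = real (?wl h) / real (?wl (s k))" using M1p by simp
    finally show ?thesis unfolding h_def by simp
  qed
  then show "ereal (tm n A m / (M1 n S * C1 n S * real n))
    \<le> Limsup (inf (principal (iter_dom n H phi m)) (filtercomap (\<lambda>g. real (word_len n S g)) at_top))
        (\<lambda>g. ereal (real (word_len n S (iter_map phi m g)) / real (word_len n S g)))"
    by (intro Limsup_seq_lower[OF lim]) auto
qed

end



lemma ereal_le_dense: assumes "\<And>r. rho < r \<Longrightarrow> c \<le> ereal r" shows "c \<le> ereal rho"
proof (rule ccontr)
  assume "\<not> c \<le> ereal rho"
  then have "ereal rho < c" by simp
  then obtain z where "ereal rho < ereal z" "ereal z < c" using ereal_dense2 by blast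
  then show False using assms[of z] by simp
qed

lemma powr_root_lim: assumes "(a::real) > 0"
  shows "((\<lambda>m. a powr (1 / real m) * r) \<longlongrightarrow> r) sequentially"
proof -
  have "((\<lambda>m. a powr (1 / real m)) \<longlongrightarrow> a powr 0) sequentially"
    using assms by (intro tendsto_powr tendsto_const lim_1_over_n) auto
  then have "((\<lambda>m. a powr (1 / real m) * r) \<longlongrightarrow> a powr 0 * r) sequentially"
    by (intro tendsto_mult tendsto_const)
  then show ?thesis using assms by simp
qed

theorem mainTheorem11:
  fixes n :: nat and H :: "int vec set" and phi :: "int vec \<Rightarrow> int vec"
    and A :: "real mat" and S :: "int vec set"
  assumes "n \<ge> 1"
    and "virtual_endo_Zn n H phi"
    and "A \<in> carrier_mat n n"
    and "\<forall>h\<in>H. A *\<^sub>v map_vec real_of_int h = map_vec real_of_int (phi h)"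
    and "\<forall>i<n. \<forall>j<n. A $$ (i, j) \<ge> 0"
    and "fin_sym_gen_set n S"
  shows "contraction_coeff n S H phi = ereal (spectral_radius (map_mat complex_of_real A))"
proof -
  note n1 = assms(1) and V = assms(2) and A = assms(3) and AH = assms(4) and nn = assms(5) and SG = assms(6)
  define rho where "rho = spectral_radius (map_mat complex_of_real A)"
  have n0: "n > 0" using n1 by simp
  have Ac: "map_mat complex_of_real A \<in> carrier_mat n n" using A by simp
  have rho0: "rho \<ge> 0"
  proof -
    obtain x :: complex where "rho = norm x" using spectral_radius_mem_max(1)[OF Ac n0] unfolding rho_def by auto
    then show ?thesis by simp
  qed
  define al where "al = 1 / (M1 n S * C1 n S * real n)"
  define be where "be = C1 n S * M1 n S"
  have alp: "al > 0" unfolding al_def using M1_pos[OF SG] C1_pos[OF SG] n0 by simp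
  have bep: "be > 0" unfolding be_def using M1_pos[OF SG] C1_pos[OF SG] by simp
  define x where "x m = real_of_ereal (inner_coeff n S H phi m)" for m
  have xb: "inner_coeff n S H phi m = ereal (x m) \<and> al * tm n A m \<le> x m \<and> x m \<le> be * tm n A m" for m
  proof -
    have lo: "ereal (al * tm n A m) \<le> inner_coeff n S H phi m"
      using inner_lower[OF n1 V A AH nn SG, of m] unfolding al_def by simp
    have up: "inner_coeff n S H phi m \<le> ereal (be * tm n A m)"
      using inner_upper[OF n1 V A AH nn SG, of m] unfolding be_def by simp
    show ?thesis
    proof (cases "inner_coeff n S H phi m")
      case (real r) then show ?thesis using lo up unfolding x_def by simp
    next
      case PInf then show ?thesis using up by simp
    next
      case MInf then show ?thesis using lo by simp
    qed
  qed
  have x0: "x m \<ge> 0" for m using xb[of m] alp tm_nonneg[of n A m] by (meson mult_nonneg_nonneg order.trans less_imp_le)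
  have cc: "contraction_coeff n S H phi = limsup (\<lambda>m. ereal (x m powr (1 / real m)))"
    unfolding contraction_coeff_def x_def ..
  have upper: "contraction_coeff n S H phi \<le> ereal r" if r: "rho < r" for r
  proof -
    have r0: "r > 0" using r rho0 by simp
    obtain K where K: "\<forall>m. tm n A m \<le> K * r ^ m" using tm_upper[OF A n0] r unfolding rho_def by blast
    define K' where "K' = max K 1"
    have K': "tm n A m \<le> K' * r ^ m" for m
    proof -
      have "K * r ^ m \<le> K' * r ^ m" unfolding K'_def using r0 by (intro mult_right_mono) auto
      then show ?thesis using K by (meson order.trans)
    qed
    have K'p: "K' > 0" unfolding K'_def by simp
    have ev: "\<forall>\<^sub>F m in sequentially. ereal (x m powr (1 / real m)) \<le> ereal ((be * K') powr (1 / real m) * r)"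
    proof (rule eventually_mono[OF eventually_ge_at_top[of 1]])
      fix m :: nat assume m: "m \<ge> 1"
      have "x m \<le> be * (K' * r ^ m)" using xb[of m] K'[of m] bep by (meson mult_left_mono order.trans less_imp_le)
      then have "x m powr (1 / real m) \<le> (be * K' * r ^ m) powr (1 / real m)"
        using x0[of m] by (intro powr_mono2) (auto simp: mult.assoc)
      also have "\<dots> = (be * K') powr (1 / real m) * (r ^ m) powr (1 / real m)" by (simp add: powr_mult)
      also have "(r ^ m) powr (1 / real m) = r" using r0 m by (intro root_pow) auto
      finally show "ereal (x m powr (1 / real m)) \<le> ereal ((be * K') powr (1 / real m) * r)" by simp
    qed
    have "limsup (\<lambda>m. ereal (x m powr (1 / real m))) \<le> limsup (\<lambda>m. ereal ((be * K') powr (1 / real m) * r))"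
      by (rule Limsup_mono[OF ev])
    also have "\<dots> = ereal r"
      using bep K'p by (intro lim_imp_Limsup) (auto simp: powr_root_lim)
    finally show ?thesis using cc by simp
  qed
  have lower: "ereal rho \<le> contraction_coeff n S H phi"
  proof -
    have ev: "\<forall>\<^sub>F m in sequentially. ereal (al powr (1 / real m) * rho) \<le> ereal (x m powr (1 / real m))"
    proof (rule eventually_mono[OF eventually_ge_at_top[of 1]])
      fix m :: nat assume m: "m \<ge> 1"
      have "rho ^ m \<le> tm n A m" using tm_lower[OF A n0] unfolding rho_def by blast
      then have "al * rho ^ m \<le> x m" using xb[of m] alp by (meson mult_left_mono order.trans less_imp_le)
      then have "(al * rho ^ m) powr (1 / real m) \<le> x m powr (1 / real m)"
        using alp rho0 by (intro powr_mono2) auto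
      moreover have "(al * rho ^ m) powr (1 / real m) = al powr (1 / real m) * (rho ^ m) powr (1 / real m)"
        by (simp add: powr_mult)
      moreover have "(rho ^ m) powr (1 / real m) = rho" using rho0 m by (intro root_pow) auto
      ultimately show "ereal (al powr (1 / real m) * rho) \<le> ereal (x m powr (1 / real m))" by simp
    qed
    have "ereal rho = limsup (\<lambda>m. ereal (al powr (1 / real m) * rho))"
      using alp by (intro lim_imp_Limsup[symmetric]) (auto simp: powr_root_lim)
    also have "\<dots> \<le> limsup (\<lambda>m. ereal (x m powr (1 / real m)))" by (rule Limsup_mono[OF ev])
    finally show ?thesis using cc by simp
  qed
  have "contraction_coeff n S H phi \<le> ereal rho" by (rule ereal_le_dense) (rule upper)
  then show ?thesis using lower unfolding rho_def by simp
qed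

end
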